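(* Let $p$ be a prime, $e\ge1$, $q=p^e$, $0\le\ell\le e-1$, and let $m\ge n$. Let $\varphi_1,\dots,\varphi_m\in\mathbb{F}_q^n$ span $\mathbb{F}_q^n$ (i.e. form a frame for $\mathbb{F}_q^n$), and let $\Phi$ be the $n\times m$ matrix whose $j$-th column is $\varphi_j$, viewed as a linear map $\mathbb{F}_q^m\to\mathbb{F}_q^n$. Let $\Phi^{\dagger_\ell}=\sigma_\ell(\Phi)^t$, the $m\times n$ matrix (map $\mathbb{F}_q^n\to\mathbb{F}_q^m$) obtained by raising every entry of $\Phi$ to the power $p^\ell$ and transposing. Then $\operatorname{Ker}(\Phi^{\dagger_\ell}\Phi)=\operatorname{Ker}\Phi$ and $\operatorname{Im}(\Phi^{\dagger_\ell}\Phi)=\operatorname{Im}\Phi^{\dagger_\ell}$.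
   Context: $\sigma_\ell(c)=c^{p^\ell}$ for $c\in\mathbb{F}_q$, applied entrywise to matrices. Equivalently, $\Phi^{\dagger_\ell}\mathbf{y}=\big((\varphi_i,\mathbf{y})_\ell\big)_{i=1}^m$ where $(\mathbf{x},\mathbf{y})_\ell=\sum_{i}x_i^{p^\ell}y_i$. *)

theory Defs
  imports "HOL-Analysis.Analysis"
begin

definition is_frame :: "('m::finite \<Rightarrow> 'a::field ^ 'n::finite) \<Rightarrow> bool" where
  "is_frame \<phi> \<longleftrightarrow> (\<forall>y. \<exists>c::'m \<Rightarrow> 'a. (\<Sum>j\<in>UNIV. c j *s \<phi> j) = y)"

definition synth_mat :: "('m::finite \<Rightarrow> 'a ^ 'n::finite) \<Rightarrow> 'a ^ 'm ^ 'n" where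
  "synth_mat \<phi> = (\<chi> i j. \<phi> j $ i)"

definition frob_adj :: "nat \<Rightarrow> nat \<Rightarrow> 'a::field ^ 'm::finite ^ 'n::finite \<Rightarrow> 'a ^ 'n ^ 'm" where
  "frob_adj p l A = (\<chi> j i. (A $ i $ j) ^ (p ^ l))"

definition mat_ker :: "'a::field ^ 'm::finite ^ 'n::finite \<Rightarrow> ('a ^ 'm) set" where
  "mat_ker A = {x. A *v x = 0}"

definition mat_im :: "'a::field ^ 'm::finite ^ 'n::finite \<Rightarrow> ('a ^ 'n) set" where
  "mat_im A = range (\<lambda>x. A *v x)"

end

theory Submission
  imports Defs "HOL-Number_Theory.Number_Theory" "HOL-Computational_Algebra.Computational_Algebra"
begin

lemma char_eq:
  assumes "prime p" "CARD('a::{field,finite}) = p ^ e"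
  shows "CHAR('a) = p"
proof -
  have pos: "CHAR('a) > 0" by (simp add: finite_imp_CHAR_pos)
  have pr: "prime CHAR('a)" using prime_CHAR_semidom[OF pos] .
  have "CHAR('a) dvd p ^ e" using CHAR_dvd_CARD[where 'a='a] assms(2) by simp
  hence "CHAR('a) dvd p" using pr prime_dvd_power by blast
  thus ?thesis using pr assms(1) by (metis prime_nat_iff prime_gt_1_nat less_irrefl)
qed

lemma frob_props:
  assumes "prime p" "CARD('a::{field,finite}) = p ^ e"
  shows "\<And>x y::'a. (x + y) ^ (p ^ l) = x ^ (p ^ l) + y ^ (p ^ l)"
    and "\<And>(f::'b \<Rightarrow> 'a) A. (sum f A) ^ (p ^ l) = (\<Sum>i\<in>A. f i ^ (p ^ l))"
    and "surj (\<lambda>x::'a. x ^ (p ^ l))"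
proof -
  have c: "CHAR('a) = p" using char_eq[OF assms] .
  have pc: "prime CHAR('a)" using c assms(1) by simp
  show add: "\<And>x y::'a. (x + y) ^ (p ^ l) = x ^ (p ^ l) + y ^ (p ^ l)"
    using freshmans_dream'[OF pc, of "p ^ l" l] c by simp
  show "\<And>(f::'b \<Rightarrow> 'a) A. (sum f A) ^ (p ^ l) = (\<Sum>i\<in>A. f i ^ (p ^ l))"
    using freshmans_dream_sum'[OF pc, of "p ^ l" l] c by simp
  have "inj (\<lambda>x::'a. x ^ (p ^ l))"
  proof
    fix x y :: 'a assume h: "x ^ (p ^ l) = y ^ (p ^ l)"
    have "x ^ (p ^ l) = (x - y) ^ (p ^ l) + y ^ (p ^ l)" using add[of "x - y" y] by simp
    hence "(x - y) ^ (p ^ l) = 0" using h by simp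
    thus "x = y" by simp
  qed
  thus "surj (\<lambda>x::'a. x ^ (p ^ l))" using finite_UNIV_inj_surj[of "\<lambda>x::'a. x ^ (p ^ l)"] by simp
qed

theorem mainTheorem2:
  fixes p e l :: nat and \<phi> :: "'m::finite \<Rightarrow> 'a::{field,finite} ^ 'n::finite"
  assumes "prime p" and "e \<ge> 1" and "CARD('a) = p ^ e" and "l \<le> e - 1"
    and "CARD('n) \<le> CARD('m)"
    and "is_frame \<phi>"
  shows "mat_ker (frob_adj p l (synth_mat \<phi>) ** synth_mat \<phi>) = mat_ker (synth_mat \<phi>)
     \<and> mat_im (frob_adj p l (synth_mat \<phi>) ** synth_mat \<phi>) = mat_im (frob_adj p l (synth_mat \<phi>))"
proof -
  define A where "A = synth_mat \<phi>"
  define B where "B = frob_adj p l A"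
  note fp = frob_props[OF assms(1) assms(3)]
  have surjA: "\<exists>c. A *v c = w" for w
  proof -
    obtain c where c: "(\<Sum>j\<in>UNIV. c j *s \<phi> j) = w" using assms(6) unfolding is_frame_def by blast
    have "A *v (\<chi> j. c j) = w"
      unfolding c[symmetric] A_def synth_mat_def
      by (simp add: vec_eq_iff matrix_vector_mult_def sum_component mult.commute)
    thus ?thesis by blast
  qed
  have injB: "y = 0" if hy: "B *v y = 0" for y
  proof -
    have "\<forall>i. \<exists>z. z ^ (p ^ l) = y $ i" using fp(3) by (metis surjD)
    then obtain zf where zf: "\<And>i. zf i ^ (p ^ l) = y $ i" by metis
    define z where "z = (\<chi> i. zf i)"
    have orth: "(\<Sum>i\<in>UNIV. \<phi> j $ i * z $ i) = 0" for j
    proof -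
      have "0 = (B *v y) $ j" using hy by simp
      also have "\<dots> = (\<Sum>i\<in>UNIV. (\<phi> j $ i) ^ (p ^ l) * (z $ i) ^ (p ^ l))"
        by (simp add: B_def A_def frob_adj_def synth_mat_def matrix_vector_mult_def z_def zf)
      also have "\<dots> = (\<Sum>i\<in>UNIV. \<phi> j $ i * z $ i) ^ (p ^ l)"
        by (simp add: fp(2) power_mult_distrib)
      finally show ?thesis by simp
    qed
    have zk: "z $ k = 0" for k
    proof -
      obtain c where c: "A *v c = axis k 1" using surjA by blast
      have "z $ k = (\<Sum>i\<in>UNIV. (A *v c) $ i * z $ i)"
        unfolding c by (simp add: axis_def if_distrib[of "\<lambda>t. t * _"] cong: if_cong)
      also have "\<dots> = (\<Sum>i\<in>UNIV. \<Sum>j\<in>UNIV. c $ j * (\<phi> j $ i * z $ i))"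
        by (simp add: A_def synth_mat_def matrix_vector_mult_def sum_distrib_right sum_distrib_left mult_ac)
      also have "\<dots> = (\<Sum>j\<in>UNIV. c $ j * (\<Sum>i\<in>UNIV. \<phi> j $ i * z $ i))"
        by (subst sum.swap) (simp add: sum_distrib_left)
      also have "\<dots> = 0" using orth by simp
      finally show ?thesis .
    qed
    have "z = 0" using zk by (simp add: vec_eq_iff)
    hence "y $ i = 0" for i using zf[of i] assms(1) by (simp add: z_def vec_eq_iff power_0_left prime_gt_0_nat)
    thus ?thesis by (simp add: vec_eq_iff)
  qed
  have ker: "mat_ker (B ** A) = mat_ker A"
    unfolding mat_ker_def using injB
    by (auto simp flip: matrix_vector_mul_assoc)
  have im: "mat_im (B ** A) = mat_im B"
  proof
    show "mat_im (B ** A) \<subseteq> mat_im B"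
      unfolding mat_im_def by (auto simp flip: matrix_vector_mul_assoc)
    show "mat_im B \<subseteq> mat_im (B ** A)"
    proof
      fix v assume "v \<in> mat_im B"
      then obtain y where y: "v = B *v y" unfolding mat_im_def by blast
      obtain c where "A *v c = y" using surjA by blast
      hence "v = (B ** A) *v c" using y by (simp flip: matrix_vector_mul_assoc)
      thus "v \<in> mat_im (B ** A)" unfolding mat_im_def by blast
    qed
  qed
  show ?thesis using ker im unfolding A_def B_def by simp
qed

end
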